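(* The axiom system $APAL_{int}$ satisfies substitution of equivalents: for all $\varphi,\psi,\chi\in\mathcal{L}_{APAL_{int}}$ and $p\in\mathit{Prop}$, if $\varphi\leftrightarrow\psi$ is a theorem of $APAL_{int}$, then $\chi[p/\varphi]\leftrightarrow\chi[p/\psi]$ is a theorem of $APAL_{int}$, where $\chi[p/\varphi]$ denotes the uniform substitution of $\varphi$ for $p$ in $\chi$.
   Context: Fix a countable set $\mathit{Prop}$ and a finite non-empty set $\mathcal{A}$ of agents. $\mathcal{L}_{APAL_{int}}$: $\varphi ::= p \mid \neg\varphi \mid \varphi\wedge\varphi \mid K_i\varphi \mid \mathrm{int}(\varphi)\mid [\varphi]\varphi\mid\Box\varphi$; $\mathcal{L}_{PAL_{int}}$ its $\Box$-free fragment; $\bot:=p\wedge\neg p$, other connectives are abbreviations. Necessity forms: $\xi(\sharp)::=\sharp\mid\varphi\to\xi(\sharp)\mid K_i\xi(\sharp)\mid\mathrm{int}(\xi(\sharp))\mid[\varphi]\xi(\sharp)$; $\xi(\varphi)$ replaces the unique $\sharp$ by $\varphi$. $APAL_{int}$: axioms: propositional tautologies; $K_i(\varphi\to\psi)\to(K_i\varphi\to K_i\psi)$; $K_i\varphi\to\varphi$; $K_i\varphi\to K_iK_i\varphi$; $\neg K_i\varphi\to K_i\neg K_i\varphi$; $\mathrm{int}(\varphi\to\psi)\to(\mathrm{int}(\varphi)\to\mathrm{int}(\psi))$; $\mathrm{int}(\varphi)\to\varphi$; $\mathrm{int}(\varphi)\to\mathrm{int}(\mathrm{int}(\varphi))$;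 $K_i\varphi\to\mathrm{int}(\varphi)$; (R1) $[\varphi]p\leftrightarrow(\mathrm{int}(\varphi)\to p)$; (R2) $[\varphi]\neg\psi\leftrightarrow(\mathrm{int}(\varphi)\to\neg[\varphi]\psi)$; (R3) $[\varphi](\psi\wedge\chi)\leftrightarrow[\varphi]\psi\wedge[\varphi]\chi$; (R4) $[\varphi]\mathrm{int}(\psi)\leftrightarrow(\mathrm{int}(\varphi)\to\mathrm{int}([\varphi]\psi))$; (R5) $[\varphi]K_i\psi\leftrightarrow(\mathrm{int}(\varphi)\to K_i[\varphi]\psi)$; (R6) $[\varphi][\psi]\chi\leftrightarrow[\neg[\varphi]\neg\mathrm{int}(\psi)]\chi$; (R7) $\Box\varphi\to[\chi]\varphi$ for $\chi\in\mathcal{L}_{PAL_{int}}$. Rules: modus ponens; from $\varphi$ infer $K_i\varphi$; from $\varphi$ infer $\mathrm{int}(\varphi)$; from $\varphi$ infer $[\psi]\varphi$; from $\xi([\psi]\chi)$ for all $\psi\in\mathcal{L}_{PAL_{int}}$ infer $\xi(\Box\chi)$. Theorems: smallest set containing the axioms and closed under the rules. *)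

theory Defs
  imports "HOL-Library.Countable"
begin

text \<open>Formulas of L_APAL_int over propositional variables of type 'p (countable)
and agents of type 'a (finite, nonempty since HOL types are nonempty).\<close>

datatype ('p, 'a) fm =
    Atom 'p
  | Neg "('p, 'a) fm"
  | Conj "('p, 'a) fm" "('p, 'a) fm"
  | K 'a "('p, 'a) fm"
  | Intr "('p, 'a) fm"
  | Ann "('p, 'a) fm" "('p, 'a) fm"
  | Box "('p, 'a) fm"

definition Imp :: "('p, 'a) fm \<Rightarrow> ('p, 'a) fm \<Rightarrow> ('p, 'a) fm" where
  "Imp a b = Neg (Conj a (Neg b))"

definition Iff :: "('p, 'a) fm \<Rightarrow> ('p, 'a) fm \<Rightarrow> ('p, 'a) fm" where
  "Iff a b = Conj (Imp a b) (Imp b a)"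

fun box_free :: "('p, 'a) fm \<Rightarrow> bool" where
  "box_free (Atom p) = True"
| "box_free (Neg a) = box_free a"
| "box_free (Conj a b) = (box_free a \<and> box_free b)"
| "box_free (K i a) = box_free a"
| "box_free (Intr a) = box_free a"
| "box_free (Ann a b) = (box_free a \<and> box_free b)"
| "box_free (Box a) = False"

text \<open>Propositional tautologies: valid under every assignment of truth values
to the maximal non-Boolean subformulas.\<close>
fun peval :: "(('p, 'a) fm \<Rightarrow> bool) \<Rightarrow> ('p, 'a) fm \<Rightarrow> bool" where
  "peval v (Neg a) = (\<not> peval v a)"
| "peval v (Conj a b) = (peval v a \<and> peval v b)"
| "peval v f = v f"

definition tautology :: "('p, 'a) fm \<Rightarrow> bool" where
  "tautology f = (\<forall>v. peval v f)"

datatype ('p, 'a) nform =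
    Hole
  | NImp "('p, 'a) fm" "('p, 'a) nform"
  | NK 'a "('p, 'a) nform"
  | NInt "('p, 'a) nform"
  | NAnn "('p, 'a) fm" "('p, 'a) nform"

fun fill :: "('p, 'a) nform \<Rightarrow> ('p, 'a) fm \<Rightarrow> ('p, 'a) fm" where
  "fill Hole f = f"
| "fill (NImp a x) f = Imp a (fill x f)"
| "fill (NK i x) f = K i (fill x f)"
| "fill (NInt x) f = Intr (fill x f)"
| "fill (NAnn a x) f = Ann a (fill x f)"

inductive apal_thm :: "('p::countable, 'a::finite) fm \<Rightarrow> bool" where
  Taut: "tautology f \<Longrightarrow> apal_thm f"
| KK: "apal_thm (Imp (K i (Imp a b)) (Imp (K i a) (K i b)))"
| KT: "apal_thm (Imp (K i a) a)"
| K4: "apal_thm (Imp (K i a) (K i (K i a)))"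
| K5: "apal_thm (Imp (Neg (K i a)) (K i (Neg (K i a))))"
| IK: "apal_thm (Imp (Intr (Imp a b)) (Imp (Intr a) (Intr b)))"
| IT: "apal_thm (Imp (Intr a) a)"
| I4: "apal_thm (Imp (Intr a) (Intr (Intr a)))"
| KI: "apal_thm (Imp (K i a) (Intr a))"
| R1: "apal_thm (Iff (Ann a (Atom p)) (Imp (Intr a) (Atom p)))"
| R2: "apal_thm (Iff (Ann a (Neg b)) (Imp (Intr a) (Neg (Ann a b))))"
| R3: "apal_thm (Iff (Ann a (Conj b c)) (Conj (Ann a b) (Ann a c)))"
| R4: "apal_thm (Iff (Ann a (Intr b)) (Imp (Intr a) (Intr (Ann a b))))"
| R5: "apal_thm (Iff (Ann a (K i b)) (Imp (Intr a) (K i (Ann a b))))"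
| R6: "apal_thm (Iff (Ann a (Ann b c)) (Ann (Neg (Ann a (Neg (Intr b)))) c))"
| R7: "box_free c \<Longrightarrow> apal_thm (Imp (Box a) (Ann c a))"
| MP: "apal_thm (Imp a b) \<Longrightarrow> apal_thm a \<Longrightarrow> apal_thm b"
| NecK: "apal_thm a \<Longrightarrow> apal_thm (K i a)"
| NecI: "apal_thm a \<Longrightarrow> apal_thm (Intr a)"
| NecAnn: "apal_thm a \<Longrightarrow> apal_thm (Ann b a)"
| Omega: "(\<And>b. box_free b \<Longrightarrow> apal_thm (fill x (Ann b c))) \<Longrightarrow> apal_thm (fill x (Box c))"

fun subst :: "'p \<Rightarrow> ('p, 'a) fm \<Rightarrow> ('p, 'a) fm \<Rightarrow> ('p, 'a) fm" where
  "subst p f (Atom q) = (if q = p then f else Atom q)"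
| "subst p f (Neg a) = Neg (subst p f a)"
| "subst p f (Conj a b) = Conj (subst p f a) (subst p f b)"
| "subst p f (K i a) = K i (subst p f a)"
| "subst p f (Intr a) = Intr (subst p f a)"
| "subst p f (Ann a b) = Ann (subst p f a) (subst p f b)"
| "subst p f (Box a) = Box (subst p f a)"

end

theory Submission
  imports Defs
begin

lemma taut1: "tautology (Imp A B) \<Longrightarrow> apal_thm A \<Longrightarrow> apal_thm B"
  by (rule MP[OF Taut])

lemma conjI_thm: "apal_thm A \<Longrightarrow> apal_thm B \<Longrightarrow> apal_thm (Conj A B)"
proof -
  assume a: "apal_thm A" and b: "apal_thm B"
  have "apal_thm (Imp A (Imp B (Conj A B)))" by (rule Taut) (auto simp: tautology_def Imp_def)
  then show ?thesis using a b MP by blast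
qed


lemma iff_sym: "apal_thm (Iff a b) \<Longrightarrow> apal_thm (Iff b a)"
  by (rule taut1[of "Iff a b"]) (auto simp: tautology_def Imp_def Iff_def)

lemma iff_trans: "apal_thm (Iff a b) \<Longrightarrow> apal_thm (Iff b c) \<Longrightarrow> apal_thm (Iff a c)"
  by (rule taut1[of "Conj (Iff a b) (Iff b c)"], (auto simp: tautology_def Imp_def Iff_def), rule conjI_thm) (auto simp: tautology_def Imp_def Iff_def)

lemma iff_imp: "apal_thm (Iff a b) \<Longrightarrow> apal_thm (Imp a b)"
  by (rule taut1[of "Iff a b"]) (auto simp: tautology_def Imp_def Iff_def)

lemma imp_iff: "apal_thm (Imp a b) \<Longrightarrow> apal_thm (Imp b a) \<Longrightarrow> apal_thm (Iff a b)"
  by (rule taut1[of "Conj (Imp a b) (Imp b a)"], (auto simp: tautology_def Imp_def Iff_def), rule conjI_thm) (auto simp: tautology_def Imp_def Iff_def)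

lemma iff_refl: "apal_thm (Iff a a)"
  by (rule Taut) (auto simp: tautology_def Imp_def Iff_def)

lemma K_mono: "apal_thm (Imp a b) \<Longrightarrow> apal_thm (Imp (K i a) (K i b))"
  by (rule MP[OF KK NecK])

lemma K_cong: "apal_thm (Iff a b) \<Longrightarrow> apal_thm (Iff (K i a) (K i b))"
  by (meson K_mono imp_iff iff_imp iff_sym)

lemma I_mono: "apal_thm (Imp a b) \<Longrightarrow> apal_thm (Imp (Intr a) (Intr b))"
  by (rule MP[OF IK NecI])

lemma I_cong: "apal_thm (Iff a b) \<Longrightarrow> apal_thm (Iff (Intr a) (Intr b))"
  by (meson I_mono imp_iff iff_imp iff_sym)

lemma L0_step:
  assumes IH: "\<And>a. apal_thm (Imp (Neg (Intr a)) (Ann a d))"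
  shows "apal_thm (Imp (Neg (Intr a)) (Ann a (Ann b d)))"
proof -
  let ?a2 = "Neg (Ann a (Neg (Intr b)))"
  have 1: "apal_thm (Imp (Neg (Intr ?a2)) (Ann ?a2 d))" by (rule IH)
  have 2: "apal_thm (Iff (Ann a (Ann b d)) (Ann ?a2 d))" by (rule R6)
  have 3: "apal_thm (Imp (Intr ?a2) ?a2)" by (rule IT)
  have 4: "apal_thm (Iff (Ann a (Neg (Intr b))) (Imp (Intr a) (Neg (Ann a (Intr b)))))" by (rule R2)
  show ?thesis
    by (rule taut1[OF _ conjI_thm[OF 1 conjI_thm[OF 2 conjI_thm[OF 3 4]]]]) (auto simp: tautology_def Imp_def Iff_def)
qed

lemma L0: "apal_thm (Imp (Neg (Intr a)) (Ann a c))"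
proof (induction c arbitrary: a)
  case (Atom p)
  show ?case by (rule taut1[OF _ R1[of a p]]) (auto simp: tautology_def Imp_def Iff_def)
next
  case (Neg d)
  show ?case by (rule taut1[OF _ R2[of a d]]) (auto simp: tautology_def Imp_def Iff_def)
next
  case (Conj d e)
  show ?case by (rule taut1[OF _ conjI_thm[OF R3[of a d e] conjI_thm[OF Conj.IH(1) Conj.IH(2)]]]) (auto simp: tautology_def Imp_def Iff_def)
next
  case (K i d)
  show ?case by (rule taut1[OF _ R5[of a i d]]) (auto simp: tautology_def Imp_def Iff_def)
next
  case (Intr d)
  show ?case by (rule taut1[OF _ R4[of a d]]) (auto simp: tautology_def Imp_def Iff_def)
next
  case (Ann b d)
  show ?case by (rule L0_step[OF Ann.IH(2)])
next
  case (Box d)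
  have "apal_thm (fill (NImp (Neg (Intr a)) (NAnn a Hole)) (Box d))"
    by (rule Omega, simp, rule L0_step[OF Box.IH])
  then show ?case by simp
qed

lemma ann_mono: "apal_thm (Imp b b') \<Longrightarrow> apal_thm (Imp (Ann a b) (Ann a b'))"
proof -
  assume h: "apal_thm (Imp b b')"
  have 1: "apal_thm (Ann a (Neg (Conj b (Neg b'))))" using NecAnn[OF h] by (simp add: Imp_def)
  have 2: "apal_thm (Iff (Ann a (Neg (Conj b (Neg b')))) (Imp (Intr a) (Neg (Ann a (Conj b (Neg b'))))))" by (rule R2)
  have 3: "apal_thm (Iff (Ann a (Conj b (Neg b'))) (Conj (Ann a b) (Ann a (Neg b'))))" by (rule R3)
  have 4: "apal_thm (Iff (Ann a (Neg b')) (Imp (Intr a) (Neg (Ann a b'))))" by (rule R2)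
  have 5: "apal_thm (Imp (Neg (Intr a)) (Ann a b'))" by (rule L0)
  show ?thesis
    by (rule taut1[OF _ conjI_thm[OF 1 conjI_thm[OF 2 conjI_thm[OF 3 conjI_thm[OF 4 5]]]]]) (auto simp: tautology_def Imp_def Iff_def)
qed

lemma ann_body_cong: "apal_thm (Iff b b') \<Longrightarrow> apal_thm (Iff (Ann a b) (Ann a b'))"
  by (meson ann_mono imp_iff iff_imp iff_sym)

lemma box_mono: "apal_thm (Imp d d') \<Longrightarrow> apal_thm (Imp (Box d) (Box d'))"
proof -
  assume h: "apal_thm (Imp d d')"
  have "apal_thm (fill (NImp (Box d) Hole) (Box d'))"
  proof (rule Omega)
    fix e :: "('a,'b) fm" assume "box_free e"
    hence c1: "apal_thm (Imp (Box d) (Ann e d))" by (rule R7)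
    have c2: "apal_thm (Imp (Ann e d) (Ann e d'))" by (rule ann_mono[OF h])
    show "apal_thm (fill (NImp (Box d) Hole) (Ann e d'))"
      by (simp, rule taut1[OF _ conjI_thm[OF c1 c2]]) (auto simp: tautology_def Imp_def Iff_def)
  qed
  then show ?thesis by simp
qed

lemma box_cong: "apal_thm (Iff d d') \<Longrightarrow> apal_thm (Iff (Box d) (Box d'))"
  by (meson box_mono imp_iff iff_imp iff_sym)

fun nboxes :: "('p, 'a) fm \<Rightarrow> nat" where
  "nboxes (Atom p) = 0"
| "nboxes (Neg a) = nboxes a"
| "nboxes (Conj a b) = nboxes a + nboxes b"
| "nboxes (K i a) = nboxes a"
| "nboxes (Intr a) = nboxes a"
| "nboxes (Ann a b) = nboxes a + nboxes b"
| "nboxes (Box a) = Suc (nboxes a)"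

fun msize :: "('p, 'a) fm \<Rightarrow> nat" where
  "msize (Atom p) = 1"
| "msize (Neg a) = Suc (msize a)"
| "msize (Conj a b) = Suc (msize a + msize b)"
| "msize (K i a) = Suc (msize a)"
| "msize (Intr a) = Suc (msize a)"
| "msize (Ann a b) = msize a + msize b + 3"
| "msize (Box a) = Suc (msize a)"

lemma msize_pos: "msize f > 0"
  by (cases f) auto

lemma nboxes_bf: "box_free e \<Longrightarrow> nboxes e = 0"
  by (induction e) auto

lemma ann_annc_step:
  assumes IHc: "\<And>a a'. apal_thm (Iff a a') \<Longrightarrow> apal_thm (Iff (Ann a (Neg (Intr c))) (Ann a' (Neg (Intr c))))"
    and IHd: "\<And>a a'. apal_thm (Iff a a') \<Longrightarrow> apal_thm (Iff (Ann a d) (Ann a' d))"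
    and h: "apal_thm (Iff a a')"
  shows "apal_thm (Iff (Ann a (Ann c d)) (Ann a' (Ann c d)))"
proof -
  have e1: "apal_thm (Iff (Neg (Ann a (Neg (Intr c)))) (Neg (Ann a' (Neg (Intr c)))))"
    by (rule taut1[OF _ IHc[OF h]]) (auto simp: tautology_def Imp_def Iff_def)
  show ?thesis
    by (rule iff_trans[OF R6[of a c d] iff_trans[OF IHd[OF e1] iff_sym[OF R6[of a' c d]]]])
qed

lemma ann_cong_all:
  "\<forall>a a'. apal_thm (Iff a a') \<longrightarrow> apal_thm (Iff (Ann a b) (Ann a' b))"
proof (induction b rule: wf_induct[OF wf_measures[of "[nboxes, msize]"]])
  case (1 b)
  have IH: "\<And>y a a'. (y, b) \<in> measures [nboxes, msize] \<Longrightarrow> apal_thm (Iff a a') \<Longrightarrow>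
     apal_thm (Iff (Ann a y) (Ann a' y))" using 1 by blast
  show ?case
  proof (intro allI impI)
    fix a a' assume h: "apal_thm (Iff (a::('a,'b) fm) a')"
    have ia: "apal_thm (Iff (Intr a) (Intr a'))" by (rule I_cong[OF h])
    show "apal_thm (Iff (Ann a b) (Ann a' b))"
    proof (cases b)
      case (Atom p)
      show ?thesis unfolding Atom
        by (rule taut1[OF _ conjI_thm[OF ia conjI_thm[OF R1[of a p] R1[of a' p]]]]) (auto simp: tautology_def Imp_def Iff_def)
    next
      case (Neg d)
      have 1: "apal_thm (Iff (Ann a d) (Ann a' d))" by (rule IH[OF _ h], simp add: Neg)
      show ?thesis unfolding Neg
        by (rule taut1[OF _ conjI_thm[OF ia conjI_thm[OF R2[of a d] conjI_thm[OF R2[of a' d] 1]]]]) (auto simp: tautology_def Imp_def Iff_def)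
    next
      case (Conj d e)
      have 1: "apal_thm (Iff (Ann a d) (Ann a' d))" by (rule IH[OF _ h], simp add: Conj msize_pos, arith)
      have 2: "apal_thm (Iff (Ann a e) (Ann a' e))" by (rule IH[OF _ h], simp add: Conj msize_pos, arith)
      show ?thesis unfolding Conj
        by (rule taut1[OF _ conjI_thm[OF 1 conjI_thm[OF 2 conjI_thm[OF R3[of a d e] R3[of a' d e]]]]]) (auto simp: tautology_def Imp_def Iff_def)
    next
      case (K i d)
      have "apal_thm (Iff (Ann a d) (Ann a' d))" by (rule IH[OF _ h], simp add: K)
      hence 1: "apal_thm (Iff (K i (Ann a d)) (K i (Ann a' d)))" by (rule K_cong)
      show ?thesis unfolding K
        by (rule taut1[OF _ conjI_thm[OF ia conjI_thm[OF R5[of a i d] conjI_thm[OF R5[of a' i d] 1]]]]) (auto simp: tautology_def Imp_def Iff_def)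
    next
      case (Intr d)
      have "apal_thm (Iff (Ann a d) (Ann a' d))" by (rule IH[OF _ h], simp add: Intr)
      hence 1: "apal_thm (Iff (Intr (Ann a d)) (Intr (Ann a' d)))" by (rule I_cong)
      show ?thesis unfolding Intr
        by (rule taut1[OF _ conjI_thm[OF ia conjI_thm[OF R4[of a d] conjI_thm[OF R4[of a' d] 1]]]]) (auto simp: tautology_def Imp_def Iff_def)
    next
      case (Ann c d)
      show ?thesis unfolding Ann
        by (rule ann_annc_step[OF _ _ h]; rule IH; simp add: Ann msize_pos; arith?)
    next
      case (Box d)
      have IHd: "\<And>a a'. apal_thm (Iff a a') \<Longrightarrow> apal_thm (Iff (Ann a d) (Ann a' d))"
        by (rule IH, simp add: Box)
      have IHe: "apal_thm (Iff (Ann a (Neg (Intr e))) (Ann a' (Neg (Intr e))))"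
        if "box_free e" "apal_thm (Iff a a')" for e a a' :: "('a, 'b) fm"
        using IH[of "Neg (Intr e)" a a'] that by (simp add: Box nboxes_bf)
      have dir: "apal_thm (Imp (Ann a1 (Box d)) (Ann a2 (Box d)))" if h1: "apal_thm (Iff a1 a2)" for a1 a2
      proof -
        have "apal_thm (fill (NImp (Ann a1 (Box d)) (NAnn a2 Hole)) (Box d))"
        proof (rule Omega)
          fix e :: "('a,'b) fm" assume bf: "box_free e"
          have 1: "apal_thm (Imp (Ann a1 (Box d)) (Ann a1 (Ann e d)))"
            by (rule ann_mono, rule R7[OF bf])
          have 2: "apal_thm (Iff (Ann a1 (Ann e d)) (Ann a2 (Ann e d)))"
            by (rule ann_annc_step[OF IHe[OF bf] IHd h1])
          show "apal_thm (fill (NImp (Ann a1 (Box d)) (NAnn a2 Hole)) (Ann e d))"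
            by (simp, rule taut1[OF _ conjI_thm[OF 1 2]]) (auto simp: tautology_def Imp_def Iff_def)
        qed
        then show ?thesis by simp
      qed
      show ?thesis unfolding Box
        by (rule imp_iff[OF dir[OF h] dir[OF iff_sym[OF h]]])
    qed
  qed
qed

lemma ann_cong: "apal_thm (Iff a a') \<Longrightarrow> apal_thm (Iff (Ann a b) (Ann a' b))"
  using ann_cong_all by blast

theorem mainTheorem12:
  fixes \<phi> \<psi> \<chi> :: "('p::countable, 'a::finite) fm" and p :: 'p
  assumes "apal_thm (Iff \<phi> \<psi>)"
  shows "apal_thm (Iff (subst p \<phi> \<chi>) (subst p \<psi> \<chi>))"
proof (induction \<chi>)
  case (Atom q)
  then show ?case using assms by (cases "q = p") (simp_all add: iff_refl)
next
  case (Neg d)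
  show ?case by (simp, rule taut1[OF _ Neg.IH]) (auto simp: tautology_def Imp_def Iff_def)
next
  case (Conj d e)
  show ?case by (simp, rule taut1[OF _ conjI_thm[OF Conj.IH]]) (auto simp: tautology_def Imp_def Iff_def)
next
  case (K i d)
  then show ?case by (simp add: K_cong)
next
  case (Intr d)
  then show ?case by (simp add: I_cong)
next
  case (Ann c d)
  then show ?case by (simp, meson iff_trans ann_cong ann_body_cong)
next
  case (Box d)
  then show ?case by (simp add: box_cong)
qed

end
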